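(* Work on $\mathbb R^5$ with coordinates $x_1,\dots,x_5$ and the objects defined in the context. For $\mathbf w\in\{\mathbf u,\mathbf v\}$ the following two sets of formal vector fields are equal: $\{F_1\,\partial\,\mathbf w+F_2\,(b,\mathbf w)^{(1)}+F_3\,(a,\mathbf w)^{(1)}: F_1,F_2\in\mathcal R[[a,b]],\ F_3\in\mathcal R[[a]]\}$ and $\{G_1\,(b,\mathbf w)^{(1)}+G_2\,(a,\mathbf w)^{(1)}: G_1,G_2\in\mathcal R[[a,b]]\}$.
   Context: Let $N=\mathrm{diag}(N_2,N_3)$ be the $5\times5$ nilpotent matrix in upper Jordan form with blocks of sizes 2 and 3, $M=\mathrm{diag}(M_2,M_3)$ with $M_2=\begin{pmatrix}0&0\\1&0\end{pmatrix}$, $M_3=\begin{pmatrix}0&0&0\\2&0&0\\0&2&0\end{pmatrix}$, and $H=\mathrm{diag}(1,-1,2,0,-2)$. With $\mathcal D_Af(\mathbf x)=f'(\mathbf x)A\mathbf x$, put $\mathcal Y=\mathcal D_{M^*}=x_2\partial_{x_1}+2x_4\partial_{x_3}+2x_5\partial_{x_4}$. Invariants (elements of $\ker\mathcal D_{N^*}$, weights w.r.t. $\mathcal D_H$): $a=x_1$ (weight 1), $b=x_3$ (weight 2), $c=x_4^2-2x_3x_5$ (weight 0), $\partial=(a,b)^{(1)}=\widehat a\,a\,\mathcal Yb-\widehat b(\mathcal Ya)b=2x_1x_4-2x_2x_3$ (weight 1), $e=(a^2,b)^{(2)}=8x_1^2x_5-8x_1x_2x_4+4x_2^2x_3$ (weight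 0). $\mathcal R=\mathbb R[[c,e]]$, and $\mathcal R[[a,b]]$ (resp. $\mathcal R[[a]]$) denotes the set of all $F(a,b,c,e)$ (resp. $F(a,c,e)$) for formal power series $F$. Let $\mathbf u=\mathbf e_2$ (weight 1) and $\mathbf v=\mathbf e_5$ (weight 2), standard basis vectors. For an invariant $f$ of weight $\widehat f\ge1$ and $\mathbf w\in\{\mathbf u,\mathbf v\}$ of weight $\widehat{\mathbf w}$, $(f,\mathbf w)^{(1)}=-\widehat f\,f\,M^*\mathbf w-\widehat{\mathbf w}(\mathcal Yf)\mathbf w$; explicitly $(a,\mathbf u)^{(1)}=-(x_1\mathbf e_1+x_2\mathbf e_2)$, $(b,\mathbf u)^{(1)}=-(2x_3\mathbf e_1+2x_4\mathbf e_2)$, $(a,\mathbf v)^{(1)}=-(2x_1\mathbf e_4+2x_2\mathbf e_5)$, $(b,\mathbf v)^{(1)}=-(4x_3\mathbf e_4+4x_4\mathbf e_5)$. *)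

theory Defs
  imports Complex_Main "HOL-Library.Poly_Mapping"
begin

text \<open>Formal power series in the variables x_1,...,x_5 (variable index i stands for x_i).\<close>

type_synonym mono = "nat \<Rightarrow>\<^sub>0 nat"
type_synonym mps = "mono \<Rightarrow> real"
text \<open>Formal vector fields: component i (i = 1..5) is a formal power series.\<close>
type_synonym vfield = "nat \<Rightarrow> mps"

definition mdeg :: "mono \<Rightarrow> nat" where
  "mdeg m = (\<Sum>i\<in>Poly_Mapping.keys m. Poly_Mapping.lookup m i)"

definition mps_add :: "mps \<Rightarrow> mps \<Rightarrow> mps" where
  "mps_add f g = (\<lambda>m. f m + g m)"

definition mps_smult :: "real \<Rightarrow> mps \<Rightarrow> mps" where
  "mps_smult r f = (\<lambda>m. r * f m)"

definition mps_mult :: "mps \<Rightarrow> mps \<Rightarrow> mps" where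
  "mps_mult f g = (\<lambda>m. \<Sum>(p, q) \<in> {(p, q). p + q = m}. f p * g q)"

definition mps_one :: mps where
  "mps_one = (\<lambda>m. if m = 0 then 1 else 0)"

fun mps_pow :: "mps \<Rightarrow> nat \<Rightarrow> mps" where
  "mps_pow f 0 = mps_one"
| "mps_pow f (Suc n) = mps_mult f (mps_pow f n)"

definition X :: "nat \<Rightarrow> mps" where
  "X i = (\<lambda>m. if m = Poly_Mapping.single i 1 then 1 else 0)"

definition pd :: "nat \<Rightarrow> mps \<Rightarrow> mps" where
  "pd i f = (\<lambda>m. real (Poly_Mapping.lookup m i + 1) * f (m + Poly_Mapping.single i 1))"

text \<open>Y = D_{M^*} = x_2 d/dx_1 + 2 x_4 d/dx_3 + 2 x_5 d/dx_4.\<close>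
definition opY :: "mps \<Rightarrow> mps" where
  "opY f = mps_add (mps_mult (X 2) (pd 1 f))
             (mps_add (mps_smult 2 (mps_mult (X 4) (pd 3 f)))
                      (mps_smult 2 (mps_mult (X 5) (pd 4 f))))"

text \<open>The matrix M^* (transpose of M = diag(M_2, M_3)), entries indexed 1..5.\<close>
definition Mstar :: "nat \<Rightarrow> nat \<Rightarrow> real" where
  "Mstar i j = (if (i, j) = (1, 2) then 1 else if (i, j) = (3, 4) then 2
                else if (i, j) = (4, 5) then 2 else 0)"

text \<open>Constant vectors in R^5 as functions on indices 1..5; standard basis vector e_k.\<close>
definition evec :: "nat \<Rightarrow> nat \<Rightarrow> real" where
  "evec k = (\<lambda>j. if j = k then 1 else 0)"

definition Mstar_app :: "(nat \<Rightarrow> real) \<Rightarrow> nat \<Rightarrow> real" where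
  "Mstar_app w = (\<lambda>i. \<Sum>j\<in>{1..5}. Mstar i j * w j)"

text \<open>Transvectant (f, w)^(1) = - hat f * f * M^* w - hat w * (Y f) * w,
  for an invariant f of weight fw and a constant vector w of weight ww.\<close>
definition trans1 :: "mps \<Rightarrow> real \<Rightarrow> (nat \<Rightarrow> real) \<Rightarrow> real \<Rightarrow> vfield" where
  "trans1 f fw w ww = (\<lambda>i. mps_add (mps_smult (- fw * Mstar_app w i) f)
                                   (mps_smult (- ww * w i) (opY f)))"

definition inv_a :: mps where "inv_a = X 1"
definition inv_b :: mps where "inv_b = X 3"
definition inv_c :: mps where
  "inv_c = mps_add (mps_mult (X 4) (X 4)) (mps_smult (-2) (mps_mult (X 3) (X 5)))"
definition inv_d :: mps where
  "inv_d = mps_add (mps_smult 2 (mps_mult (X 1) (X 4))) (mps_smult (-2) (mps_mult (X 2) (X 3)))"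
definition inv_e :: mps where
  "inv_e = mps_add (mps_smult 8 (mps_mult (mps_mult (X 1) (X 1)) (X 5)))
            (mps_add (mps_smult (-8) (mps_mult (mps_mult (X 1) (X 2)) (X 4)))
                     (mps_smult 4 (mps_mult (mps_mult (X 2) (X 2)) (X 3))))"

text \<open>Substitution F(p1,p2,p3,p4) of series p1..p4 without constant term into a formal
  power series F in four variables, given by its coefficients F i j k l of
  y1^i y2^j y3^k y4^l. Since every pk has no monomials of degree 0, only the finitely many
  (i,j,k,l) with entries bounded by the degree of m contribute to the coefficient of m.\<close>
definition subst4 :: "(nat \<Rightarrow> nat \<Rightarrow> nat \<Rightarrow> nat \<Rightarrow> real) \<Rightarrow> mps \<Rightarrow> mps \<Rightarrow> mps \<Rightarrow> mps \<Rightarrow> mps" where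
  "subst4 F p1 p2 p3 p4 = (\<lambda>m.
     \<Sum>i\<le>mdeg m. \<Sum>j\<le>mdeg m. \<Sum>k\<le>mdeg m. \<Sum>l\<le>mdeg m.
       F i j k l * mps_mult (mps_mult (mps_pow p1 i) (mps_pow p2 j))
                            (mps_mult (mps_pow p3 k) (mps_pow p4 l)) m)"

text \<open>R[[a,b]] = all F(a,b,c,e); R[[a]] = all F(a,c,e) (F not depending on its b-slot).\<close>
definition Rab :: "mps set" where
  "Rab = {subst4 F inv_a inv_b inv_c inv_e | F. True}"

definition Ra :: "mps set" where
  "Ra = {subst4 F inv_a inv_b inv_c inv_e | F. \<forall>i j k l. j \<noteq> 0 \<longrightarrow> F i j k l = 0}"

definition vscale :: "mps \<Rightarrow> vfield \<Rightarrow> vfield" where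
  "vscale F V = (\<lambda>i. mps_mult F (V i))"

definition vadd :: "vfield \<Rightarrow> vfield \<Rightarrow> vfield" where
  "vadd V W = (\<lambda>i. mps_add (V i) (W i))"

definition vconst :: "(nat \<Rightarrow> real) \<Rightarrow> vfield" where
  "vconst w = (\<lambda>i. mps_smult (w i) mps_one)"

end

theory Submission
  imports Defs "HOL-Library.FuncSet"
begin


definition D :: "mono \<Rightarrow> mono set" where "D m = {p. \<exists>q. p + q = m}"

lemma D_lookup_le: "p \<in> D m \<Longrightarrow> Poly_Mapping.lookup p i \<le> Poly_Mapping.lookup m i"
  by (auto simp: D_def lookup_add)

lemma finite_D: "finite (D (m::mono))"
proof -
  let ?f = "\<lambda>p::mono. restrict (Poly_Mapping.lookup p) (Poly_Mapping.keys m)"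
  have inj: "inj_on ?f (D m)"
  proof (rule inj_onI)
    fix p p' assume p: "p \<in> D m" and p': "p' \<in> D m" and eq: "?f p = ?f p'"
    show "p = p'"
    proof (rule poly_mapping_eqI)
      fix k show "Poly_Mapping.lookup p k = Poly_Mapping.lookup p' k"
      proof (cases "k \<in> Poly_Mapping.keys m")
        case True then show ?thesis using fun_cong[OF eq, of k] by simp
      next
        case False
        then have "Poly_Mapping.lookup m k = 0" by (simp add: in_keys_iff)
        then show ?thesis using D_lookup_le[OF p, of k] D_lookup_le[OF p', of k] by simp
      qed
    qed
  qed
  have "?f ` D m \<subseteq> PiE (Poly_Mapping.keys m) (\<lambda>i. {..Poly_Mapping.lookup m i})"
    using D_lookup_le by auto
  moreover have "finite (PiE (Poly_Mapping.keys m) (\<lambda>i. {..Poly_Mapping.lookup m i}))"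
    by (rule finite_PiE) auto
  ultimately have "finite (?f ` D m)" by (rule finite_subset)
  then show ?thesis using inj by (simp add: finite_image_iff)
qed

lemma D_diff: "p \<in> D m \<Longrightarrow> p + (m - p) = m"
  by (auto simp: D_def)

lemma D_diff_mem: "p \<in> D m \<Longrightarrow> m - p \<in> D m"
  by (auto simp: D_def add.commute)

lemma mult_D: "mps_mult f g m = (\<Sum>p\<in>D m. f p * g (m - p))"
proof -
  have e: "{(p,q). p+q = m} = (\<lambda>p. (p, m - p)) ` D m"
    by (auto simp: D_def image_iff)
  have i: "inj_on (\<lambda>p. (p, m - p)) (D m)" by (auto intro: inj_onI)
  show ?thesis unfolding mps_mult_def e by (simp add: sum.reindex[OF i])
qed

lemma mult_comm: "mps_mult f g = mps_mult g f"
proof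
  fix m
  have "(\<Sum>p\<in>D m. f p * g (m - p)) = (\<Sum>p\<in>D m. g p * f (m - p))"
    apply (rule sum.reindex_bij_witness[where i="\<lambda>p. m - p" and j="\<lambda>p. m - p"])
    by (auto simp: D_diff_mem) (metis D_diff add_diff_cancel_right')+
  then show "mps_mult f g m = mps_mult g f m" by (simp add: mult_D)
qed

lemma mult_assoc: "mps_mult (mps_mult f g) h = mps_mult f (mps_mult g h)"
proof
  fix m
  have "mps_mult (mps_mult f g) h m = (\<Sum>p\<in>D m. \<Sum>r\<in>D p. f r * g (p - r) * h (m - p))"
    by (simp add: mult_D sum_distrib_right)
  also have "\<dots> = (\<Sum>(p,r)\<in>Sigma (D m) D. f r * g (p - r) * h (m - p))"
    by (simp add: sum.Sigma finite_D)
  also have "\<dots> = (\<Sum>(r,s)\<in>Sigma (D m) (\<lambda>r. D (m - r)). f r * g s * h (m - r - s))"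
    apply (rule sum.reindex_bij_witness[where i="\<lambda>(r,s). (r + s, r)" and j="\<lambda>(p,r). (r, p - r)"])
    apply (auto simp: D_def diff_diff_add)
    apply (metis add.assoc)
    apply (simp add: add.assoc)
    apply (metis add.assoc)
    done
  also have "\<dots> = (\<Sum>r\<in>D m. \<Sum>s\<in>D (m - r). f r * g s * h (m - r - s))"
    by (simp add: sum.Sigma finite_D)
  also have "\<dots> = mps_mult f (mps_mult g h) m"
    by (simp add: mult_D sum_distrib_left mult.assoc)
  finally show "mps_mult (mps_mult f g) h m = mps_mult f (mps_mult g h) m" .
qed

lemma zero_D: "0 \<in> D m" by (auto simp: D_def)

lemma sum_one: "(\<Sum>p\<in>D m. mps_one p * g (m - p)) = g m"
proof -
  have "(\<Sum>p\<in>D m. mps_one p * g (m - p)) = (\<Sum>p\<in>D m. if p = 0 then g m else 0)"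
    by (rule sum.cong) (auto simp: mps_one_def)
  also have "\<dots> = g m" by (simp add: finite_D zero_D)
  finally show ?thesis .
qed

lemma mult_one: "mps_mult mps_one g = g"
  by (rule ext) (simp add: mult_D sum_one)

lemma mult_add: "mps_mult f (mps_add g h) = mps_add (mps_mult f g) (mps_mult f h)"
  by (auto simp: mult_D mps_add_def distrib_left sum.distrib)

typedef ps = "UNIV :: mps set" morphisms coef Abs_ps by auto

lemma coef_inj: "coef x = coef y \<Longrightarrow> x = y" by (simp add: coef_inject)
lemma Abs_ps_inv [simp]: "coef (Abs_ps f) = f" by (simp add: Abs_ps_inverse)
lemma Abs_ps_eq_iff: "Abs_ps f = Abs_ps g \<longleftrightarrow> f = g" by (simp add: Abs_ps_inject)

instantiation ps :: comm_ring_1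
begin
definition "0 = Abs_ps (\<lambda>_. 0)"
definition "1 = Abs_ps mps_one"
definition "x + y = Abs_ps (mps_add (coef x) (coef y))"
definition "- x = Abs_ps (\<lambda>m. - coef x m)"
definition "x - y = Abs_ps (\<lambda>m. coef x m - coef y m)"
definition "x * y = Abs_ps (mps_mult (coef x) (coef y))"
instance
proof
  fix a b c :: ps
  show "a * b * c = a * (b * c)" by (simp add: times_ps_def mult_assoc)
  show "a * b = b * a" by (simp add: times_ps_def mult_comm)
  show "1 * a = a" by (simp add: times_ps_def one_ps_def mult_one coef_inverse)
  show "(a + b) * c = a * c + b * c"
    by (simp add: times_ps_def plus_ps_def mult_comm[of _ "coef c"] mult_add)
  show "a + b + c = a + (b + c)" by (simp add: plus_ps_def mps_add_def add.assoc)
  show "a + b = b + a" by (simp add: plus_ps_def mps_add_def add.commute)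
  show "0 + a = a" by (simp add: plus_ps_def zero_ps_def mps_add_def coef_inverse)
  show "- a + a = 0" by (simp add: plus_ps_def zero_ps_def uminus_ps_def mps_add_def)
  show "a - b = a + - b" by (simp add: plus_ps_def minus_ps_def uminus_ps_def mps_add_def)
  show "(0::ps) \<noteq> 1"
  proof
    assume "(0::ps) = 1"
    then have "(\<lambda>_::mono. 0::real) = mps_one" by (simp add: zero_ps_def one_ps_def Abs_ps_eq_iff)
    then show False by (metis mps_one_def zero_neq_one)
  qed
qed
end

abbreviation A :: "mps \<Rightarrow> ps" where "A \<equiv> Abs_ps"

lemma A_add: "A (mps_add f g) = A f + A g" by (simp add: plus_ps_def)
lemma A_mult: "A (mps_mult f g) = A f * A g" by (simp add: times_ps_def)
lemma A_one: "A mps_one = 1" by (simp add: one_ps_def)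

definition cst :: "real \<Rightarrow> ps" where "cst r = A (mps_smult r mps_one)"

lemma coef_cst_mult: "coef (cst r * x) = mps_smult r (coef x)"
proof
  fix m show "coef (cst r * x) m = mps_smult r (coef x) m"
    using sum_one[where m=m and g="coef x"]
    by (simp add: times_ps_def cst_def mult_D mps_smult_def sum_distrib_left[symmetric] mult.assoc)
qed

lemma A_smult: "A (mps_smult r f) = cst r * A f"
proof -
  have "coef (cst r * A f) = mps_smult r f" by (simp add: coef_cst_mult)
  from arg_cong[OF this, of A] show ?thesis by (simp add: coef_inverse)
qed

lemma cst_mult: "cst (r * s) = cst r * cst s"
proof -
  have "cst r * cst s = cst r * A (mps_smult s mps_one)" by (simp add: cst_def[of s])
  also have "\<dots> = A (mps_smult r (mps_smult s mps_one))" by (simp add: A_smult)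
  also have "\<dots> = cst (r * s)" by (simp add: cst_def mps_smult_def mult.assoc)
  finally show ?thesis by simp
qed

lemma cst_add: "cst (r + s) = cst r + cst s"
  by (simp add: cst_def plus_ps_def mps_add_def mps_smult_def distrib_right)

lemma cst_one: "cst 1 = 1" by (simp add: cst_def one_ps_def mps_smult_def)
lemma cst_zero: "cst 0 = 0" by (simp add: cst_def zero_ps_def mps_smult_def)
lemma cst_uminus: "cst (- r) = - cst r"
  by (metis add_eq_0_iff cst_add cst_zero)
lemma cst_diff: "cst (r - s) = cst r - cst s"
  by (metis cst_add cst_uminus diff_conv_add_uminus)


lemma coef_add: "coef (x + y) = mps_add (coef x) (coef y)" by (simp add: plus_ps_def)
lemma coef_mult: "coef (x * y) = mps_mult (coef x) (coef y)" by (simp add: times_ps_def)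
lemma coef_mult_D: "coef (x * y) m = (\<Sum>p\<in>D m. coef x p * coef y (m - p))"
  by (simp add: coef_mult mult_D)

lemma mdeg_sum: "finite K \<Longrightarrow> Poly_Mapping.keys m \<subseteq> K \<Longrightarrow> mdeg m = (\<Sum>i\<in>K. Poly_Mapping.lookup m i)"
  unfolding mdeg_def by (rule sum.mono_neutral_left) (auto simp: in_keys_iff)

lemma mdeg_add: "mdeg (p + q) = mdeg p + mdeg q"
proof -
  let ?K = "Poly_Mapping.keys p \<union> Poly_Mapping.keys q"
  have "mdeg (p + q) = (\<Sum>i\<in>?K. Poly_Mapping.lookup (p+q) i)"
    using keys_add[of p q] by (intro mdeg_sum) auto
  also have "\<dots> = (\<Sum>i\<in>?K. Poly_Mapping.lookup p i) + (\<Sum>i\<in>?K. Poly_Mapping.lookup q i)"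
    by (simp add: lookup_add sum.distrib)
  also have "\<dots> = mdeg p + mdeg q"
    using mdeg_sum[of ?K p] mdeg_sum[of ?K q] by simp
  finally show ?thesis .
qed

lemma mdeg_D: "p \<in> D m \<Longrightarrow> mdeg p + mdeg (m - p) = mdeg m"
  by (metis D_diff mdeg_add)

lemma mdeg_single: "mdeg (Poly_Mapping.single i (1::nat)) = 1"
  by (simp add: mdeg_def)

definition ordge :: "nat \<Rightarrow> ps \<Rightarrow> bool" where
  "ordge k x \<longleftrightarrow> (\<forall>m. mdeg m < k \<longrightarrow> coef x m = 0)"

lemma ordge_0: "ordge 0 x" by (simp add: ordge_def)

lemma ordge_mult: "ordge k x \<Longrightarrow> ordge l y \<Longrightarrow> ordge (k + l) (x * y)"
  unfolding ordge_def
proof (intro allI impI)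
  fix m assume ox: "\<forall>m. mdeg m < k \<longrightarrow> coef x m = 0" and oy: "\<forall>m. mdeg m < l \<longrightarrow> coef y m = 0"
    and lt: "mdeg m < k + l"
  have "\<forall>p\<in>D m. coef x p * coef y (m - p) = 0"
  proof
    fix p assume "p \<in> D m"
    then have "mdeg p + mdeg (m - p) = mdeg m" by (rule mdeg_D)
    then have "mdeg p < k \<or> mdeg (m - p) < l" using lt by linarith
    then show "coef x p * coef y (m - p) = 0" using ox oy by auto
  qed
  then show "coef (x * y) m = 0" unfolding coef_mult_D by (rule sum.neutral)
qed

lemma ordge_mono: "ordge k x \<Longrightarrow> l \<le> k \<Longrightarrow> ordge l x"
  by (simp add: ordge_def)

lemma ordge_mult1: "ordge 1 x \<Longrightarrow> ordge 1 (x * y)"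
  using ordge_mult[OF _ ordge_0] by fastforce

lemma ordge_power: "ordge k x \<Longrightarrow> ordge (n * k) (x ^ n)"
  by (induction n) (auto simp: ordge_0 dest: ordge_mult)

lemma ordge_add: "ordge k x \<Longrightarrow> ordge k y \<Longrightarrow> ordge k (x + y)"
  by (simp add: ordge_def coef_add mps_add_def)

lemma ordge_cst: "ordge k x \<Longrightarrow> ordge k (cst r * x)"
  by (simp add: ordge_def coef_cst_mult mps_smult_def)

lemma ordge_X: "ordge 1 (A (X i))"
  unfolding ordge_def X_def by (auto simp: mdeg_def)

lemma A_pow: "A (mps_pow f n) = A f ^ n"
  by (induction n) (simp_all add: A_one A_mult)

abbreviation "xa \<equiv> A inv_a"
abbreviation "xb \<equiv> A inv_b"
abbreviation "xc \<equiv> A inv_c"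
abbreviation "xe \<equiv> A inv_e"

lemma ord_a: "ordge 1 xa" unfolding inv_a_def by (rule ordge_X)
lemma ord_b: "ordge 1 xb" unfolding inv_b_def by (rule ordge_X)
lemma ord_c: "ordge 1 xc"
  unfolding inv_c_def A_add A_mult A_smult by (intro ordge_add ordge_cst ordge_mult1 ordge_X)
lemma ord_e: "ordge 1 xe"
  unfolding inv_e_def A_add A_mult A_smult by (intro ordge_add ordge_cst ordge_mult1 ordge_X)

definition Q :: "nat \<times> nat \<times> nat \<times> nat \<Rightarrow> ps" where
  "Q q = (case q of (i,j,k,l) \<Rightarrow> (xa ^ i * xb ^ j) * (xc ^ k * xe ^ l))"

definition qs :: "nat \<times> nat \<times> nat \<times> nat \<Rightarrow> nat" where
  "qs q = (case q of (i,j,k,l) \<Rightarrow> i + j + k + l)"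

lemma ord_Q: "ordge (qs q) (Q q)"
proof -
  obtain i j k l where q: "q = (i,j,k,l)" by (cases q) auto
  have "ordge (i*1 + j*1 + (k*1 + l*1)) (Q q)"
    unfolding q Q_def
    by (simp only: prod.case) (intro ordge_mult ordge_power ord_a ord_b ord_c ord_e)
  then show ?thesis by (simp add: q qs_def add.assoc)
qed

lemma Q_vanish: "mdeg m < qs q \<Longrightarrow> coef (Q q) m = 0"
  using ord_Q[of q] by (simp add: ordge_def)

definition box :: "nat \<Rightarrow> (nat \<times> nat \<times> nat \<times> nat) set" where
  "box N = {..N} \<times> {..N} \<times> {..N} \<times> {..N}"

definition T :: "nat \<Rightarrow> (nat \<times> nat \<times> nat \<times> nat) set" where
  "T M = {q. qs q \<le> M}"

lemma T_box: "T M \<subseteq> box M" by (auto simp: T_def box_def qs_def)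
lemma finite_box: "finite (box N)" by (simp add: box_def)
lemma finite_T: "finite (T M)" using finite_subset[OF T_box finite_box] .

definition tt :: "(nat \<Rightarrow> nat \<Rightarrow> nat \<Rightarrow> nat \<Rightarrow> real) \<Rightarrow> mono \<Rightarrow> nat \<times> nat \<times> nat \<times> nat \<Rightarrow> real" where
  "tt F m q = (case q of (i,j,k,l) \<Rightarrow> F i j k l) * coef (Q q) m"

lemma subst4_box: "subst4 F inv_a inv_b inv_c inv_e m = (\<Sum>q\<in>box (mdeg m). tt F m q)"
proof -
  have e: "mps_mult (mps_mult (mps_pow inv_a i) (mps_pow inv_b j)) (mps_mult (mps_pow inv_c k) (mps_pow inv_e l))
        = coef (Q (i,j,k,l))" for i j k l
    by (simp add: Q_def coef_mult A_pow[symmetric] coef_inverse)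
  show ?thesis
    by (simp add: subst4_def e tt_def box_def sum.cartesian_product) (intro sum.cong refl, auto split: prod.splits)
qed


lemma tt_vanish: "q \<notin> T (mdeg m) \<Longrightarrow> tt F m q = 0"
  by (simp add: tt_def T_def Q_vanish)

lemma subst4_any:
  assumes "finite S" "T (mdeg m) \<subseteq> S"
  shows "subst4 F inv_a inv_b inv_c inv_e m = (\<Sum>q\<in>S. tt F m q)"
proof -
  have "subst4 F inv_a inv_b inv_c inv_e m = (\<Sum>q\<in>T (mdeg m). tt F m q)"
    unfolding subst4_box by (rule sum.mono_neutral_right[OF finite_box T_box]) (auto simp: tt_vanish)
  also have "\<dots> = (\<Sum>q\<in>S. tt F m q)"
    by (rule sum.mono_neutral_left[OF assms(1) assms(2)]) (auto simp: tt_vanish)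
  finally show ?thesis .
qed

definition shb :: "(nat \<Rightarrow> nat \<Rightarrow> nat \<Rightarrow> nat \<Rightarrow> real) \<Rightarrow> nat \<Rightarrow> nat \<Rightarrow> nat \<Rightarrow> nat \<Rightarrow> real" where
  "shb H = (\<lambda>i j k l. if j = 0 then 0 else H i (j - 1) k l)"
definition sha :: "(nat \<Rightarrow> nat \<Rightarrow> nat \<Rightarrow> nat \<Rightarrow> real) \<Rightarrow> nat \<Rightarrow> nat \<Rightarrow> nat \<Rightarrow> nat \<Rightarrow> real" where
  "sha H = (\<lambda>i j k l. if i = 0 then 0 else H (i - 1) j k l)"
definition sigb :: "nat \<times> nat \<times> nat \<times> nat \<Rightarrow> nat \<times> nat \<times> nat \<times> nat" where
  "sigb q = (case q of (i,j,k,l) \<Rightarrow> (i, Suc j, k, l))"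
definition siga :: "nat \<times> nat \<times> nat \<times> nat \<Rightarrow> nat \<times> nat \<times> nat \<times> nat" where
  "siga q = (case q of (i,j,k,l) \<Rightarrow> (Suc i, j, k, l))"

lemma Q_sigb: "Q (sigb q) = xb * Q q"
  by (cases q) (simp add: Q_def sigb_def mult_ac)
lemma Q_siga: "Q (siga q) = xa * Q q"
  by (cases q) (simp add: Q_def siga_def mult_ac)

lemma shift_gen:
  fixes sig :: "nat \<times> nat \<times> nat \<times> nat \<Rightarrow> nat \<times> nat \<times> nat \<times> nat" and y :: ps
  assumes Qsig: "\<And>q. Q (sig q) = y * Q q"
    and inj: "inj sig"
    and qs_sig: "\<And>q. qs (sig q) = Suc (qs q)"
    and tt_sig: "\<And>m q. tt G m (sig q) = tt H m (sig q) * 0 + (case q of (i,j,k,l) \<Rightarrow> H i j k l) * coef (Q (sig q)) m"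
    and tt_zero: "\<And>m q. q \<notin> range sig \<Longrightarrow> tt G m q = 0"
  shows "A (subst4 G inv_a inv_b inv_c inv_e) = y * A (subst4 H inv_a inv_b inv_c inv_e)"
proof (rule coef_inj, rule ext)
  fix m
  let ?M = "mdeg m"
  let ?h = "\<lambda>q. case q of (i,j,k,l) \<Rightarrow> H i j k l"
  have "coef (y * A (subst4 H inv_a inv_b inv_c inv_e)) m
      = (\<Sum>p\<in>D m. coef y p * subst4 H inv_a inv_b inv_c inv_e (m - p))"
    by (simp add: coef_mult_D)
  also have "\<dots> = (\<Sum>p\<in>D m. \<Sum>q\<in>T ?M. coef y p * tt H (m - p) q)"
  proof (rule sum.cong[OF refl])
    fix p assume p: "p \<in> D m"
    have "T (mdeg (m - p)) \<subseteq> T ?M" using mdeg_D[OF p] by (auto simp: T_def)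
    then show "coef y p * subst4 H inv_a inv_b inv_c inv_e (m - p) = (\<Sum>q\<in>T ?M. coef y p * tt H (m - p) q)"
      by (simp add: subst4_any[OF finite_T] sum_distrib_left)
  qed
  also have "\<dots> = (\<Sum>q\<in>T ?M. \<Sum>p\<in>D m. coef y p * tt H (m - p) q)"
    by (rule sum.swap)
  also have "\<dots> = (\<Sum>q\<in>T ?M. ?h q * coef (Q (sig q)) m)"
    by (simp add: Qsig coef_mult_D tt_def sum_distrib_left mult_ac)
  finally have L: "coef (y * A (subst4 H inv_a inv_b inv_c inv_e)) m = (\<Sum>q\<in>T ?M. ?h q * coef (Q (sig q)) m)" .
  have "subst4 G inv_a inv_b inv_c inv_e m = (\<Sum>q\<in>T ?M. tt G m q)"
    by (rule subst4_any[OF finite_T subset_refl])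
  also have "\<dots> = (\<Sum>q\<in>T ?M \<union> sig ` T ?M. tt G m q)"
    by (rule sum.mono_neutral_left) (auto simp: finite_T tt_vanish)
  also have "\<dots> = (\<Sum>q\<in>sig ` T ?M. tt G m q)"
  proof (rule sum.mono_neutral_right)
    show "finite (T ?M \<union> sig ` T ?M)" by (simp add: finite_T)
    show "\<forall>q\<in>T ?M \<union> sig ` T ?M - sig ` T ?M. tt G m q = 0"
    proof
      fix q assume q: "q \<in> T ?M \<union> sig ` T ?M - sig ` T ?M"
      show "tt G m q = 0"
      proof (cases "q \<in> range sig")
        case True
        then obtain q' where q': "q = sig q'" by auto
        have "qs q' \<le> ?M" using q qs_sig[of q'] by (auto simp: q' T_def)
        then show ?thesis using q q' by (auto simp: T_def)
      next
        case False then show ?thesis by (rule tt_zero)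
      qed
    qed
  qed simp
  also have "\<dots> = (\<Sum>q\<in>T ?M. tt G m (sig q))"
    by (simp add: sum.reindex inj_on_subset[OF inj])
  also have "\<dots> = (\<Sum>q\<in>T ?M. ?h q * coef (Q (sig q)) m)"
    by (simp add: tt_sig)
  finally show "coef (A (subst4 G inv_a inv_b inv_c inv_e)) m = coef (y * A (subst4 H inv_a inv_b inv_c inv_e)) m"
    using L by simp
qed

lemma shift_b: "A (subst4 (shb H) inv_a inv_b inv_c inv_e) = xb * A (subst4 H inv_a inv_b inv_c inv_e)"
proof (rule shift_gen[where sig=sigb])
  show "inj sigb" by (auto simp: inj_def sigb_def split: prod.splits)
  fix q show "Q (sigb q) = xb * Q q" by (rule Q_sigb)
  show "qs (sigb q) = Suc (qs q)" by (cases q) (simp add: qs_def sigb_def)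
  fix m
  show "tt (shb H) m (sigb q) = tt H m (sigb q) * 0 + (case q of (i,j,k,l) \<Rightarrow> H i j k l) * coef (Q (sigb q)) m"
    by (cases q) (simp add: tt_def shb_def sigb_def)
  assume "q \<notin> range sigb"
  then show "tt (shb H) m q = 0"
    by (cases q) (auto simp: tt_def shb_def sigb_def image_iff gr0_conv_Suc split: prod.splits)
qed

lemma shift_a: "A (subst4 (sha H) inv_a inv_b inv_c inv_e) = xa * A (subst4 H inv_a inv_b inv_c inv_e)"
proof (rule shift_gen[where sig=siga])
  show "inj siga" by (auto simp: inj_def siga_def split: prod.splits)
  fix q show "Q (siga q) = xa * Q q" by (rule Q_siga)
  show "qs (siga q) = Suc (qs q)" by (cases q) (simp add: qs_def siga_def)
  fix m
  show "tt (sha H) m (siga q) = tt H m (siga q) * 0 + (case q of (i,j,k,l) \<Rightarrow> H i j k l) * coef (Q (siga q)) m"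
    by (cases q) (simp add: tt_def sha_def siga_def)
  assume "q \<notin> range siga"
  then show "tt (sha H) m q = 0"
    by (cases q) (auto simp: tt_def sha_def siga_def image_iff gr0_conv_Suc split: prod.splits)
qed



lemma subst4_add: "subst4 (\<lambda>i j k l. F i j k l + G i j k l) p1 p2 p3 p4 = mps_add (subst4 F p1 p2 p3 p4) (subst4 G p1 p2 p3 p4)"
  by (simp add: subst4_def mps_add_def sum.distrib distrib_right fun_eq_iff)

lemma subst4_smult: "subst4 (\<lambda>i j k l. r * F i j k l) p1 p2 p3 p4 = mps_smult r (subst4 F p1 p2 p3 p4)"
  by (simp add: subst4_def mps_smult_def sum_distrib_left mult.assoc fun_eq_iff)

definition RP :: "ps \<Rightarrow> bool" where "RP x \<longleftrightarrow> coef x \<in> Rab"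

lemma RP_iff: "RP x \<longleftrightarrow> (\<exists>F. x = A (subst4 F inv_a inv_b inv_c inv_e))"
  unfolding RP_def Rab_def by (auto simp: coef_inverse) (metis coef_inverse)

lemma RP_add: "RP x \<Longrightarrow> RP y \<Longrightarrow> RP (x + y)"
  unfolding RP_iff
proof (elim exE)
  fix F G assume "x = A (subst4 F inv_a inv_b inv_c inv_e)" "y = A (subst4 G inv_a inv_b inv_c inv_e)"
  then have "x + y = A (subst4 (\<lambda>i j k l. F i j k l + G i j k l) inv_a inv_b inv_c inv_e)"
    by (simp add: subst4_add A_add)
  then show "\<exists>F. x + y = A (subst4 F inv_a inv_b inv_c inv_e)" by blast
qed

lemma RP_cst: "RP x \<Longrightarrow> RP (cst r * x)"
  unfolding RP_iff
proof (elim exE)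
  fix F assume "x = A (subst4 F inv_a inv_b inv_c inv_e)"
  then have "cst r * x = A (subst4 (\<lambda>i j k l. r * F i j k l) inv_a inv_b inv_c inv_e)"
    by (simp add: subst4_smult A_smult)
  then show "\<exists>F. cst r * x = A (subst4 F inv_a inv_b inv_c inv_e)" by blast
qed

lemma RP_a: "RP x \<Longrightarrow> RP (xa * x)"
  unfolding RP_iff
proof (elim exE)
  fix F assume "x = A (subst4 F inv_a inv_b inv_c inv_e)"
  then have "xa * x = A (subst4 (sha F) inv_a inv_b inv_c inv_e)" by (simp add: shift_a)
  then show "\<exists>F. xa * x = A (subst4 F inv_a inv_b inv_c inv_e)" by blast
qed

lemma RP_b: "RP x \<Longrightarrow> RP (xb * x)"
  unfolding RP_iff
proof (elim exE)
  fix F assume "x = A (subst4 F inv_a inv_b inv_c inv_e)"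
  then have "xb * x = A (subst4 (shb F) inv_a inv_b inv_c inv_e)" by (simp add: shift_b)
  then show "\<exists>F. xb * x = A (subst4 F inv_a inv_b inv_c inv_e)" by blast
qed

lemma RP_diff: "RP x \<Longrightarrow> RP y \<Longrightarrow> RP (x - y)"
proof -
  assume "RP x" "RP y"
  then have "RP (x + cst (-1) * y)" by (intro RP_add RP_cst)
  then show ?thesis by (simp add: cst_uminus cst_one)
qed

lemma Ra_RP: "g \<in> Ra \<Longrightarrow> RP (A g)"
  unfolding RP_def Ra_def Rab_def by auto

lemma decomp: "RP x \<Longrightarrow> \<exists>g h. g \<in> Ra \<and> RP h \<and> x = A g + xb * h"
proof -
  assume "RP x"
  then obtain F where x: "x = A (subst4 F inv_a inv_b inv_c inv_e)" by (auto simp: RP_iff)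
  define F0 where "F0 = (\<lambda>i j k l. if j = 0 then F i j k l else 0)"
  define H where "H = (\<lambda>i j k l. F i (Suc j) k l)"
  have eqF: "F = (\<lambda>i j k l. F0 i j k l + shb H i j k l)"
    by (auto simp: fun_eq_iff F0_def H_def shb_def)
  have "subst4 F inv_a inv_b inv_c inv_e = mps_add (subst4 F0 inv_a inv_b inv_c inv_e) (subst4 (shb H) inv_a inv_b inv_c inv_e)"
    by (subst eqF) (rule subst4_add)
  then have "x = A (subst4 F0 inv_a inv_b inv_c inv_e) + xb * A (subst4 H inv_a inv_b inv_c inv_e)"
    using x by (simp add: A_add shift_b)
  moreover have "subst4 F0 inv_a inv_b inv_c inv_e \<in> Ra"
    unfolding Ra_def F0_def by auto
  moreover have "RP (A (subst4 H inv_a inv_b inv_c inv_e))" by (auto simp: RP_iff)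
  ultimately show ?thesis by blast
qed

lemma pd_X: "pd i (X j) = (if i = j then mps_one else (\<lambda>_. 0))"
proof (rule ext)
  fix m :: mono
  have "m + Poly_Mapping.single i 1 = Poly_Mapping.single j 1 \<longleftrightarrow> m = 0 \<and> i = j"
  proof
    assume h: "m + Poly_Mapping.single i 1 = Poly_Mapping.single j 1"
    have hi: "Poly_Mapping.lookup (m + Poly_Mapping.single i 1) k = Poly_Mapping.lookup (Poly_Mapping.single j (1::nat)) k" for k
      using h by simp
    have "i = j" using hi[of i] by (simp add: lookup_add lookup_single when_def split: if_splits)
    moreover have "m = 0"
      by (rule poly_mapping_eqI) (use hi \<open>i = j\<close> in \<open>simp add: lookup_add lookup_single when_def split: if_splits\<close>)
    ultimately show "m = 0 \<and> i = j" by simp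
  qed auto
  then show "pd i (X j) m = (if i = j then mps_one else (\<lambda>_. 0)) m"
    by (auto simp: pd_def X_def mps_one_def)
qed


lemma A_zero: "A (\<lambda>_. 0) = 0" by (simp add: zero_ps_def)

lemma A_opY: "A (opY f) = A (X 2) * A (pd 1 f) + cst 2 * (A (X 4) * A (pd 3 f)) + cst 2 * (A (X 5) * A (pd 4 f))"
  by (simp add: opY_def A_add A_mult A_smult add.assoc)

lemma opY_a: "A (opY inv_a) = A (X 2)"
  by (simp add: A_opY inv_a_def pd_X A_one A_zero)

lemma opY_b: "A (opY inv_b) = cst 2 * A (X 4)"
  by (simp add: A_opY inv_b_def pd_X A_one A_zero)

lemma A_trans1: "A (trans1 f fw w ww i) = cst (- fw * Mstar_app w i) * A f + cst (- ww * w i) * A (opY f)"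
  by (simp add: trans1_def A_add A_smult)

lemma Mstar_app_evec: "Mstar_app (evec k) i = (if k \<in> {1..5} then Mstar i k else 0)"
proof -
  have "Mstar_app (evec k) i = (\<Sum>j\<in>{1..5}. if k = j then Mstar i k else 0)"
    unfolding Mstar_app_def evec_def by (rule sum.cong) auto
  then show ?thesis by simp
qed

lemma cst_of_nat: "cst (of_nat n) = of_nat n"
  by (induction n) (simp_all add: cst_zero cst_add cst_one)

lemma cst_numeral: "cst (numeral n) = numeral n"
  using cst_of_nat[of "numeral n"] by simp

lemma A_d: "A inv_d = 2 * (A (X 1) * A (X 4)) - 2 * (A (X 2) * A (X 3))"
  by (simp add: inv_d_def A_add A_mult A_smult cst_uminus cst_numeral)

lemma RP_A: "RP (A f) \<longleftrightarrow> f \<in> Rab" by (simp add: RP_def)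


lemma key_u: "cst 1 * (A inv_d * cst (evec 2 i)) =
   cst 2 * xb * A (trans1 inv_a 1 (evec 2) 1 i) + cst (-1) * xa * A (trans1 inv_b 2 (evec 2) 1 i)"
  unfolding A_trans1 opY_a opY_b Mstar_app_evec
  by (cases "i = 1"; cases "i = 2"; cases "i = 4"; cases "i = 5";
      simp add: A_d inv_a_def inv_b_def Mstar_def evec_def cst_uminus cst_numeral cst_one cst_zero algebra_simps)

lemma key_v: "cst 2 * (A inv_d * cst (evec 5 i)) =
   cst 2 * xb * A (trans1 inv_a 1 (evec 5) 2 i) + cst (-1) * xa * A (trans1 inv_b 2 (evec 5) 2 i)"
  unfolding A_trans1 opY_a opY_b Mstar_app_evec
  by (cases "i = 1"; cases "i = 2"; cases "i = 4"; cases "i = 5";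
      simp add: A_d inv_a_def inv_b_def Mstar_def evec_def cst_uminus cst_numeral cst_one cst_zero algebra_simps)


lemma cst_inv: "g \<noteq> 0 \<Longrightarrow> cst (1 / g) * cst g = 1"
  by (simp add: cst_mult[symmetric] cst_one)

lemma main:
  fixes w :: "nat \<Rightarrow> real" and ww g al be :: real
  assumes g0: "g \<noteq> 0" and al0: "al \<noteq> 0"
    and key: "\<And>i. cst g * (A inv_d * cst (w i)) =
       cst al * xb * A (trans1 inv_a 1 w ww i) + cst be * xa * A (trans1 inv_b 2 w ww i)"
  shows "{vadd (vscale F1 (vscale inv_d (vconst w)))
            (vadd (vscale F2 (trans1 inv_b 2 w ww)) (vscale F3 (trans1 inv_a 1 w ww)))
          | F1 F2 F3. F1 \<in> Rab \<and> F2 \<in> Rab \<and> F3 \<in> Ra}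
       = {vadd (vscale G1 (trans1 inv_b 2 w ww)) (vscale G2 (trans1 inv_a 1 w ww))
          | G1 G2. G1 \<in> Rab \<and> G2 \<in> Rab}"
proof (intro equalityI subsetI)
  fix x assume "x \<in> {vadd (vscale F1 (vscale inv_d (vconst w)))
            (vadd (vscale F2 (trans1 inv_b 2 w ww)) (vscale F3 (trans1 inv_a 1 w ww)))
          | F1 F2 F3. F1 \<in> Rab \<and> F2 \<in> Rab \<and> F3 \<in> Ra}"
  then obtain F1 F2 F3 where x: "x = vadd (vscale F1 (vscale inv_d (vconst w)))
            (vadd (vscale F2 (trans1 inv_b 2 w ww)) (vscale F3 (trans1 inv_a 1 w ww)))"
    and F: "F1 \<in> Rab" "F2 \<in> Rab" "F3 \<in> Ra" by blast
  define G1 where "G1 = coef (A F2 + cst (1 / g) * cst be * (xa * A F1))"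
  define G2 where "G2 = coef (A F3 + cst (1 / g) * cst al * (xb * A F1))"
  have R1: "RP (A F1)" "RP (A F2)" "RP (A F3)" using F Ra_RP by (auto simp: RP_A)
  have "G1 \<in> Rab" unfolding G1_def RP_def[symmetric] mult.assoc
    by (intro RP_add RP_cst RP_a R1)
  moreover have "G2 \<in> Rab" unfolding G2_def RP_def[symmetric] mult.assoc
    by (intro RP_add RP_cst RP_b R1)
  moreover have "x = vadd (vscale G1 (trans1 inv_b 2 w ww)) (vscale G2 (trans1 inv_a 1 w ww))"
  proof (rule ext)
    fix i
    have k: "A inv_d * cst (w i) = cst (1 / g) *
       (cst al * xb * A (trans1 inv_a 1 w ww i) + cst be * xa * A (trans1 inv_b 2 w ww i))"
      using key[of i] cst_inv[OF g0] by (metis mult.assoc mult_1)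
    show "x i = vadd (vscale G1 (trans1 inv_b 2 w ww)) (vscale G2 (trans1 inv_a 1 w ww)) i"
      unfolding x Abs_ps_eq_iff[symmetric]
      by (simp add: vadd_def vscale_def vconst_def A_add A_mult A_smult A_one G1_def G2_def
          coef_inverse k algebra_simps)
  qed
  ultimately show "x \<in> {vadd (vscale G1 (trans1 inv_b 2 w ww)) (vscale G2 (trans1 inv_a 1 w ww))
          | G1 G2. G1 \<in> Rab \<and> G2 \<in> Rab}" by blast
next
  fix x assume "x \<in> {vadd (vscale G1 (trans1 inv_b 2 w ww)) (vscale G2 (trans1 inv_a 1 w ww))
          | G1 G2. G1 \<in> Rab \<and> G2 \<in> Rab}"
  then obtain G1 G2 where x: "x = vadd (vscale G1 (trans1 inv_b 2 w ww)) (vscale G2 (trans1 inv_a 1 w ww))"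
    and G: "G1 \<in> Rab" "G2 \<in> Rab" by blast
  have R: "RP (A G1)" "RP (A G2)" using G by (auto simp: RP_A)
  obtain g0' h where g0': "g0' \<in> Ra" and h: "RP h" and dec: "A G2 = A g0' + xb * h"
    using decomp[OF R(2)] by blast
  define F1 where "F1 = coef (cst (1 / al) * cst g * h)"
  define F2 where "F2 = coef (A G1 - cst (1 / al) * cst be * (xa * h))"
  have "F1 \<in> Rab" unfolding F1_def RP_def[symmetric] mult.assoc by (intro RP_cst h)
  moreover have "F2 \<in> Rab" unfolding F2_def RP_def[symmetric] mult.assoc
    by (intro RP_diff RP_cst RP_a R h)
  moreover have "x = vadd (vscale F1 (vscale inv_d (vconst w)))
            (vadd (vscale F2 (trans1 inv_b 2 w ww)) (vscale g0' (trans1 inv_a 1 w ww)))"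
  proof (rule ext)
    fix i
    have k: "xb * A (trans1 inv_a 1 w ww i) = cst (1 / al) *
       (cst g * (A inv_d * cst (w i)) - cst be * xa * A (trans1 inv_b 2 w ww i))"
    proof -
      have e: "cst g * (A inv_d * cst (w i)) - cst be * xa * A (trans1 inv_b 2 w ww i)
          = cst al * xb * A (trans1 inv_a 1 w ww i)" using key[of i] by simp
      have "cst (1 / al) * (cst al * xb * A (trans1 inv_a 1 w ww i))
           = (cst (1 / al) * cst al) * (xb * A (trans1 inv_a 1 w ww i))" by (simp add: mult.assoc)
      then show ?thesis using e cst_inv[OF al0] by simp
    qed
    have dec': "G2 = coef (A g0' + xb * h)" using arg_cong[OF dec, of coef] by simp
    show "x i = vadd (vscale F1 (vscale inv_d (vconst w)))
            (vadd (vscale F2 (trans1 inv_b 2 w ww)) (vscale g0' (trans1 inv_a 1 w ww))) i"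
      unfolding x Abs_ps_eq_iff[symmetric]
      by (simp add: vadd_def vscale_def vconst_def A_add A_mult A_smult A_one F1_def F2_def dec'
          coef_inverse algebra_simps k)
  qed
  ultimately show "x \<in> {vadd (vscale F1 (vscale inv_d (vconst w)))
            (vadd (vscale F2 (trans1 inv_b 2 w ww)) (vscale F3 (trans1 inv_a 1 w ww)))
          | F1 F2 F3. F1 \<in> Rab \<and> F2 \<in> Rab \<and> F3 \<in> Ra}" using g0' by blast
qed

theorem lemma17p12:
  assumes "(w, ww) \<in> {(evec 2, 1), (evec 5, 2)}"
  shows "{vadd (vscale F1 (vscale inv_d (vconst w)))
            (vadd (vscale F2 (trans1 inv_b 2 w ww)) (vscale F3 (trans1 inv_a 1 w ww)))
          | F1 F2 F3. F1 \<in> Rab \<and> F2 \<in> Rab \<and> F3 \<in> Ra}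
       = {vadd (vscale G1 (trans1 inv_b 2 w ww)) (vscale G2 (trans1 inv_a 1 w ww))
          | G1 G2. G1 \<in> Rab \<and> G2 \<in> Rab}"
proof -
  from assms have "(w = evec 2 \<and> ww = 1) \<or> (w = evec 5 \<and> ww = 2)" by auto
  then show ?thesis
  proof
    assume h: "w = evec 2 \<and> ww = 1"
    show ?thesis unfolding h[THEN conjunct1] h[THEN conjunct2]
      by (rule main[where g=1 and al=2 and be="-1"]) (simp_all add: key_u)
  next
    assume h: "w = evec 5 \<and> ww = 2"
    show ?thesis unfolding h[THEN conjunct1] h[THEN conjunct2]
      by (rule main[where g=2 and al=2 and be="-1"]) (simp_all add: key_v)
  qed
qed

end
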